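(* Let $0\le r<1$. In the RRH with redirection parameter $r$, for every fixed integer $k\ge 1$, $$\lim_{N\to\infty}\frac{\mathbb{E}[\mathcal{N}_k(N)]}{N}=\frac{1-r}{(k-r+1)(k-r)}.$$
   Context: The RRH with redirection parameter $r\in[0,1)$ is the following random hypergraph process. At size $N=1$ it has vertex set $\{v_1\}$ and edge set $\{\{v_1\}\}$. Given the hypergraph of size $N$ (vertices $v_1,\dots,v_N$, $N$ edges), choose an existing edge $e$ uniformly at random and add a new vertex $v_{N+1}$ and one new edge, as follows. If $e=\{v_1\}$, the new edge is $\{v_1,v_{N+1}\}$. Otherwise write $e=\{v_{i_1},\dots,v_{i_n}\}$ with $1=i_1<\dots<i_n$, $n\ge2$; independently, with probability $1-r$ the new edge is $e\cup\{v_{N+1}\}$ and with probability $r$ it is $\{v_{i_1},\dots,v_{i_{n-1}},v_{N+1}\}$. The degree of a vertex is the number of edges containing it; $\mathcal{N}_k(N)$ is the number of vertices of degree $k$ at size $N$. *)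

theory Defs
  imports "HOL-Probability.Probability"
begin

text \<open>A hypergraph of size N is represented by its list of edges (length N);
  vertex v_i is the natural number i, so the vertex set is {1..N}.
  The i-th edge of the list (0-based) is the one added when going to size i+1.\<close>

type_synonym hg = "nat set list"

definition rrh_step :: "real \<Rightarrow> hg \<Rightarrow> hg pmf" where
  "rrh_step r es =
     bind_pmf (pmf_of_set {..<length es}) (\<lambda>i.
       let e = es ! i; v = length es + 1 in
       if e = {1} then return_pmf (es @ [{1, v}])
       else bind_pmf (bernoulli_pmf r) (\<lambda>b.
         return_pmf (es @ [if b then insert v (e - {Max e}) else insert v e])))"

text \<open>Distribution of the RRH at size N (N \<ge> 1); size 0 is a dummy equal to size 1.\<close>
fun rrh :: "real \<Rightarrow> nat \<Rightarrow> hg pmf" where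
  "rrh r 0 = return_pmf [{1}]"
| "rrh r (Suc 0) = return_pmf [{1}]"
| "rrh r (Suc (Suc n)) = bind_pmf (rrh r (Suc n)) (rrh_step r)"

definition hdeg :: "hg \<Rightarrow> nat \<Rightarrow> nat" where
  "hdeg es v = card {i. i < length es \<and> v \<in> es ! i}"

definition Nk :: "nat \<Rightarrow> hg \<Rightarrow> nat" where
  "Nk k es = card {v \<in> {1..length es}. hdeg es v = k}"

end

theory Submission
  imports Defs
begin
lemma aux: "y > 0 \<Longrightarrow> \<alpha> \<ge> 0 \<Longrightarrow> ((1 - \<alpha> / y) * x + b) / (y+1) - \<beta> / (1+\<alpha>) = (1 - (1+\<alpha>) / (y+1)) * (x / y - \<beta> / (1+\<alpha>)) + (b - \<beta>) / (y+1)"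
  for x b \<alpha> \<beta> y :: real
proof -
  assume a: "y > 0" "\<alpha> \<ge> 0"
  have "1 + \<alpha> > 0" "y + 1 > 0" using a by auto
  then show ?thesis using a by (simp add: divide_simps) (simp add: algebra_simps)
qed

lemma rec_lim:
  fixes x b :: "nat \<Rightarrow> real" and \<alpha> \<beta> :: real
  assumes a0: "\<alpha> \<ge> 0"
    and rec: "\<And>N. N \<ge> 1 \<Longrightarrow> x (Suc N) = (1 - \<alpha> / N) * x N + b N"
    and lim: "b \<longlonglongrightarrow> \<beta>"
  shows "(\<lambda>N. x N / N) \<longlonglongrightarrow> \<beta> / (1 + \<alpha>)"
proof -
  define \<gamma> where "\<gamma> = 1 + \<alpha>"
  have g1: "\<gamma> \<ge> 1" using a0 by (simp add: \<gamma>_def)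
  define z where "z N = x N / N - \<beta> / \<gamma>" for N
  have zrec: "z (Suc N) = (1 - \<gamma> / (N+1)) * z N + (b N - \<beta>) / (N+1)" if "N \<ge> 1" for N
  proof -
    have N0: "real N > 0" using that by simp
    have "z (Suc N) = ((1 - \<alpha> / N) * x N + b N) / (N+1) - \<beta> / \<gamma>"
      unfolding z_def using rec[OF that] by simp
    also have "\<dots> = (1 - \<gamma> / (N+1)) * z N + (b N - \<beta>) / (N+1)"
      unfolding z_def \<gamma>_def using aux[OF N0 a0, of "x N" "b N" \<beta>] by (simp add: add.commute)
    finally show ?thesis .
  qed
  have "z \<longlonglongrightarrow> 0"
  proof (rule LIMSEQ_I)
    fix \<epsilon> :: real assume ep: "\<epsilon> > 0"
    define \<eta> where "\<eta> = \<gamma> * \<epsilon> / 2"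
    have eta: "\<eta> > 0" using ep g1 by (simp add: \<eta>_def)
    from LIMSEQ_D[OF lim eta] obtain M0 where M0: "\<And>n. n \<ge> M0 \<Longrightarrow> norm (b n - \<beta>) < \<eta>" by blast
    obtain M :: nat where M: "M \<ge> M0" "M \<ge> 1" "real M \<ge> \<gamma>"
      by (metis max.cobounded1 max.cobounded2 nat_ceiling_le_eq real_nat_ceiling_ge le_trans
          of_nat_le_iff)
    define w where "w N = max (\<bar>z N\<bar> - \<eta>/\<gamma>) 0" for N
    have wstep: "(N+1) * w (Suc N) \<le> N * w N" if "N \<ge> M" for N
    proof -
      have N1: "N \<ge> 1" "real N \<ge> \<gamma>" "N \<ge> M0" using that M by auto
      have c0: "1 - \<gamma> / (N+1) \<ge> 0" using N1 by (simp add: field_simps)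
      have c1a: "\<gamma> / (N+1) \<ge> 1 / (N+1)" using g1 by (simp add: divide_right_mono)
      have c1b: "1 - 1 / real (N+1) = N / real (N+1)" by (simp add: field_simps)
      have c1: "1 - \<gamma> / (N+1) \<le> N / (N+1)" using c1a c1b by linarith
      have bb: "\<bar>b N - \<beta>\<bar> \<le> \<eta>" using M0[OF N1(3)] by simp
      have "\<bar>z (Suc N)\<bar> \<le> (1 - \<gamma> / (N+1)) * \<bar>z N\<bar> + \<bar>b N - \<beta>\<bar> / (N+1)"
      proof -
        have "\<bar>z (Suc N)\<bar> \<le> \<bar>(1 - \<gamma> / (N+1)) * z N\<bar> + \<bar>(b N - \<beta>) / (N+1)\<bar>"
          unfolding zrec[OF N1(1)] by (rule abs_triangle_ineq)
        also have "\<bar>(1 - \<gamma> / (N+1)) * z N\<bar> = (1 - \<gamma> / (N+1)) * \<bar>z N\<bar>"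
          using c0 by (simp add: abs_mult)
        also have "\<bar>(b N - \<beta>) / (N+1)\<bar> = \<bar>b N - \<beta>\<bar> / (N+1)"
          by (simp add: abs_divide)
        finally show ?thesis .
      qed
      also have "\<dots> \<le> (1 - \<gamma> / (N+1)) * \<bar>z N\<bar> + \<eta> / (N+1)"
        using bb by (simp add: divide_right_mono)
      finally have A0: "\<bar>z (Suc N)\<bar> \<le> (1 - \<gamma> / (N+1)) * \<bar>z N\<bar> + \<eta> / (N+1)" .
      have idt: "(1 - \<gamma> / (N+1)) * (\<eta>/\<gamma>) + \<eta> / (N+1) = \<eta>/\<gamma>"
        using g1 by (simp add: divide_simps) (simp add: algebra_simps)
      have dd: "(1 - \<gamma> / (N+1)) * (\<bar>z N\<bar> - \<eta>/\<gamma>) = (1 - \<gamma> / (N+1)) * \<bar>z N\<bar> - (1 - \<gamma> / (N+1)) * (\<eta>/\<gamma>)"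
        by (simp add: right_diff_distrib)
      have A: "\<bar>z (Suc N)\<bar> - \<eta>/\<gamma> \<le> (1 - \<gamma> / (N+1)) * (\<bar>z N\<bar> - \<eta>/\<gamma>)"
        using A0 idt dd by linarith
      show ?thesis
      proof (cases "\<bar>z N\<bar> - \<eta>/\<gamma> \<le> 0")
        case True
        then have "(1 - \<gamma> / (N+1)) * (\<bar>z N\<bar> - \<eta>/\<gamma>) \<le> 0" using c0 mult_nonneg_nonpos by blast
        then have "w (Suc N) = 0" using A unfolding w_def by simp
        then show ?thesis unfolding w_def by simp
      next
        case False
        then have "(1 - \<gamma> / (N+1)) * (\<bar>z N\<bar> - \<eta>/\<gamma>) \<le> N / (N+1) * (\<bar>z N\<bar> - \<eta>/\<gamma>)"
          using c1 by (intro mult_right_mono) auto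
        with A have "w (Suc N) \<le> N / (N+1) * w N" using False unfolding w_def by auto
        then show ?thesis by (simp add: field_simps)
      qed
    qed
    have wb: "N * w N \<le> M * w M" if "N \<ge> M" for N
      using that
    proof (induction N rule: dec_induct)
      case base then show ?case by simp
    next
      case (step n) then show ?case using wstep[of n] by (simp add: add.commute)
    qed
    define C where "C = M * w M"
    have C0: "C \<ge> 0" unfolding C_def w_def by simp
    obtain M2 :: nat where M2: "real M2 > 2 * C / \<epsilon>" using reals_Archimedean2 by blast
    show "\<exists>no. \<forall>n\<ge>no. norm (z n - 0) < \<epsilon>"
    proof (intro exI allI impI)
      fix n assume n: "n \<ge> max M (M2 + 1)"
      have n0: "real n > 0" "real n > 2 * C / \<epsilon>" using n M2 M by auto
      have "w n \<le> C / n" using wb[of n] n n0 by (simp add: C_def field_simps)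
      also have "\<dots> < \<epsilon> / 2" using n0 ep by (simp add: field_simps)
      finally have f1: "w n < \<epsilon>/2" .
      have f2: "\<eta>/\<gamma> = \<epsilon>/2" using g1 by (simp add: \<eta>_def)
      have f3: "\<bar>z n\<bar> - \<eta>/\<gamma> \<le> w n" unfolding w_def by simp
      have "\<bar>z n\<bar> < \<epsilon>" using f1 f2 f3 by linarith
      then show "norm (z n - 0) < \<epsilon>" by simp
    qed
  qed
  then have "(\<lambda>N. z N + \<beta> / \<gamma>) \<longlonglongrightarrow> 0 + \<beta> / \<gamma>" by (intro tendsto_add) auto
  then show ?thesis by (simp add: z_def \<gamma>_def)
qed



lemma exp_cong:
  fixes f g :: "'a \<Rightarrow> real"
  assumes "finite (set_pmf p)" "\<And>x. x \<in> set_pmf p \<Longrightarrow> f x = g x"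
  shows "measure_pmf.expectation p f = measure_pmf.expectation p g"
proof -
  have "measure_pmf.expectation p f = (\<Sum>a\<in>set_pmf p. f a * pmf p a)"
    by (rule integral_measure_pmf_real) (use assms in auto)
  also have "\<dots> = (\<Sum>a\<in>set_pmf p. g a * pmf p a)" using assms(2) by simp
  also have "\<dots> = measure_pmf.expectation p g"
    by (rule integral_measure_pmf_real[symmetric]) (use assms in auto)
  finally show ?thesis .
qed

lemma bind_exp:
  fixes h :: "'b \<Rightarrow> real"
  assumes "finite (set_pmf p)" "\<And>x. x \<in> set_pmf p \<Longrightarrow> finite (set_pmf (f x))"
  shows "measure_pmf.expectation (bind_pmf p f) h = measure_pmf.expectation p (\<lambda>a. measure_pmf.expectation (f a) h)"
proof -
  have "measure_pmf.expectation (bind_pmf p f) h = (\<Sum>a\<in>set_pmf p. pmf p a *\<^sub>R measure_pmf.expectation (f a) h)"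
    by (rule pmf_expectation_bind) (use assms in auto)
  also have "\<dots> = measure_pmf.expectation p (\<lambda>a. measure_pmf.expectation (f a) h)"
    by (subst integral_measure_pmf_real[where A="set_pmf p"]) (use assms in \<open>auto simp: mult.commute\<close>)
  finally show ?thesis .
qed

definition stepi :: "real \<Rightarrow> hg \<Rightarrow> nat \<Rightarrow> hg pmf" where
  "stepi r es i = (let e = es ! i; v = length es + 1 in
       if e = {1} then return_pmf (es @ [{1, v}])
       else bind_pmf (bernoulli_pmf r) (\<lambda>b.
         return_pmf (es @ [if b then insert v (e - {Max e}) else insert v e])))"

lemma step_eq: "rrh_step r es = bind_pmf (pmf_of_set {..<length es}) (stepi r es)"
  unfolding rrh_step_def stepi_def ..

lemma bern_fin: "finite (set_pmf (bernoulli_pmf r))"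
  by (rule finite_subset[of _ "UNIV::bool set"]) auto

lemma stepi_fin: "finite (set_pmf (stepi r es i))"
  unfolding stepi_def Let_def using bern_fin[of r]
  by (auto simp: set_bind_pmf)

lemma set_pmf_lt: "es \<noteq> [] \<Longrightarrow> set_pmf (pmf_of_set {..<length es}) = {..<length es}"
  by (rule set_pmf_of_set) auto

lemma step_fin: "es \<noteq> [] \<Longrightarrow> finite (set_pmf (rrh_step r es))"
  unfolding step_eq using stepi_fin
  by (simp add: set_bind_pmf set_pmf_lt)

lemma step_set:
  assumes "es0 \<noteq> []" "es \<in> set_pmf (rrh_step r es0)"
  shows "\<exists>i<length es0. (es0 ! i = {1} \<and> es = es0 @ [{1, length es0 + 1}]) \<or>
     (es0 ! i \<noteq> {1} \<and> es = es0 @ [insert (length es0 + 1) (es0 ! i - {Max (es0 ! i)})]) \<or>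
     (es0 ! i \<noteq> {1} \<and> es = es0 @ [insert (length es0 + 1) (es0 ! i)])"
proof -
  from assms obtain i where i: "i < length es0" "es \<in> set_pmf (stepi r es0 i)"
    unfolding step_eq by (auto simp: set_bind_pmf set_pmf_lt)
  show ?thesis
  proof (intro exI[of _ i] conjI i(1))
    show "(es0 ! i = {1} \<and> es = es0 @ [{1, length es0 + 1}]) \<or>
     (es0 ! i \<noteq> {1} \<and> es = es0 @ [insert (length es0 + 1) (es0 ! i - {Max (es0 ! i)})]) \<or>
     (es0 ! i \<noteq> {1} \<and> es = es0 @ [insert (length es0 + 1) (es0 ! i)])"
    proof (cases "es0 ! i = {1}")
      case True
      then have "stepi r es0 i = return_pmf (es0 @ [{1, length es0 + 1}])"
        unfolding stepi_def Let_def by simp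
      then show ?thesis using i(2) True by simp
    next
      case False
      define A where "A = insert (length es0 + 1) (es0 ! i - {Max (es0 ! i)})"
      define B where "B = insert (length es0 + 1) (es0 ! i)"
      have "stepi r es0 i = bind_pmf (bernoulli_pmf r) (\<lambda>b. return_pmf (es0 @ [if b then A else B]))"
        unfolding stepi_def Let_def A_def B_def using False by simp
      moreover have "{es0 @ [if b then A else B]} \<subseteq> {es0 @ [A], es0 @ [B]}" for b
        by (cases b) auto
      ultimately have "set_pmf (stepi r es0 i) \<subseteq> {es0 @ [A], es0 @ [B]}"
        by (simp add: set_bind_pmf UN_subset_iff)
      then have "es = es0 @ [A] \<or> es = es0 @ [B]" using i(2) by blast
      then show ?thesis using False unfolding A_def B_def by blast
    qed
  qed
qed

lemma rrh_fin_ne: "finite (set_pmf (rrh r N)) \<and> (\<forall>es\<in>set_pmf (rrh r N). es \<noteq> [])"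
proof (induction r N rule: rrh.induct)
  case (3 r n)
  have ne: "es \<noteq> []" if "es \<in> set_pmf (rrh r (Suc (Suc n)))" for es
    using that 3 step_set by (fastforce simp: set_bind_pmf)
  show ?case using 3 ne by (auto simp: set_bind_pmf step_fin)
qed auto

lemma rrh_fin: "finite (set_pmf (rrh r N))"
  using rrh_fin_ne by blast

lemma rrh_ne: "es \<in> set_pmf (rrh r N) \<Longrightarrow> es \<noteq> []"
  using rrh_fin_ne by blast

definition sterm :: "real \<Rightarrow> hg \<Rightarrow> (hg \<Rightarrow> real) \<Rightarrow> nat \<Rightarrow> real" where
  "sterm r es g i = (let e = es ! i; v = length es + 1 in
     if e = {1} then g (es @ [{1, v}])
     else g (es @ [insert v (e - {Max e})]) * r + g (es @ [insert v e]) * (1 - r))"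

lemma stepi_exp:
  assumes "0 \<le> r" "r \<le> 1"
  shows "measure_pmf.expectation (stepi r es i) g = sterm r es g i"
  unfolding stepi_def sterm_def Let_def
  by (auto simp: bind_exp bern_fin assms)

lemma step_exp:
  assumes "es \<noteq> []" "0 \<le> r" "r \<le> 1"
  shows "measure_pmf.expectation (rrh_step r es) g = (\<Sum>i<length es. sterm r es g i) / length es"
proof -
  have ne: "{..<length es} \<noteq> {}" using assms by auto
  show ?thesis
    unfolding step_eq
    by (subst bind_exp) (auto simp: ne stepi_fin integral_pmf_of_set[OF ne] stepi_exp assms)
qed



definition rinv :: "nat \<Rightarrow> hg \<Rightarrow> bool" where
  "rinv N es \<longleftrightarrow> length es = N \<and> (\<forall>i<N. es ! i \<subseteq> {1..Suc i} \<and> Suc i \<in> es ! i \<and> 1 \<in> es ! i)"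

lemma inv_max:
  assumes "rinv N es" "i < N" "i \<ge> 1"
  shows "Max (es ! i) = Suc i" "es ! i \<noteq> {1}"
proof -
  have s: "es ! i \<subseteq> {1..Suc i}" "Suc i \<in> es ! i" using assms unfolding rinv_def by auto
  have f: "finite (es ! i)" using s(1) finite_subset by blast
  show "Max (es ! i) = Suc i" using s f by (intro Max_eqI) auto
  show "es ! i \<noteq> {1}" using s assms(3) by auto
qed

lemma inv_0: "rinv N es \<Longrightarrow> N \<ge> 1 \<Longrightarrow> es ! 0 = {1}"
  unfolding rinv_def by fastforce

lemma inv_step:
  assumes "rinv N es" "N \<ge> 1" "es' \<in> set_pmf (rrh_step r es)"
  shows "\<exists>f. es' = es @ [f] \<and> f \<subseteq> {1..Suc N} \<and> Suc N \<in> f \<and> 1 \<in> f"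
proof -
  have ne: "es \<noteq> []" using assms unfolding rinv_def by auto
  have len: "length es = N" using assms unfolding rinv_def by auto
  obtain i where i: "i < N" and c: "(es ! i = {1} \<and> es' = es @ [{1, N + 1}]) \<or>
     (es ! i \<noteq> {1} \<and> es' = es @ [insert (N + 1) (es ! i - {Max (es ! i)})]) \<or>
     (es ! i \<noteq> {1} \<and> es' = es @ [insert (N + 1) (es ! i)])"
    using step_set[OF ne assms(3)] len by blast
  have s: "es ! i \<subseteq> {1..Suc i}" "Suc i \<in> es ! i" "1 \<in> es ! i" using assms(1) i unfolding rinv_def by auto
  have sub: "es ! i \<subseteq> {1..Suc N}" using s(1) i by auto
  show ?thesis
  proof (cases "es ! i = {1}")
    case True then show ?thesis using c by auto
  next
    case False
    then have "i \<ge> 1" using inv_0[OF assms(1,2)] by (cases i) auto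
    then have m: "Max (es ! i) = Suc i" using inv_max[OF assms(1) i] by auto
    have "1 \<in> es ! i - {Max (es ! i)}" using m s \<open>i \<ge> 1\<close> by auto
    then show ?thesis using c False sub s by auto
  qed
qed

lemma inv_snoc:
  assumes "rinv N es" "f \<subseteq> {1..Suc N}" "Suc N \<in> f" "1 \<in> f"
  shows "rinv (Suc N) (es @ [f])"
  using assms unfolding rinv_def by (auto simp: nth_append less_Suc_eq)

lemma inv_rrh: "es \<in> set_pmf (rrh r (Suc n)) \<Longrightarrow> rinv (Suc n) es"
proof (induction n arbitrary: es)
  case 0 then show ?case by (auto simp: rinv_def)
next
  case (Suc n)
  then obtain es0 where es0: "es0 \<in> set_pmf (rrh r (Suc n))" "es \<in> set_pmf (rrh_step r es0)"
    by (auto simp: set_bind_pmf)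
  have "rinv (Suc n) es0" using Suc.IH es0(1) by blast
  with inv_step[OF this _ es0(2)] show ?case using inv_snoc by fastforce
qed

lemma card_lt_Suc: "card {i. i < Suc n \<and> P i} = card {i. i < n \<and> P i} + (if P n then 1 else 0)"
proof -
  have "{i. i < Suc n \<and> P i} = {i. i < n \<and> P i} \<union> (if P n then {n} else {})"
    by (auto simp: less_Suc_eq)
  then show ?thesis by (simp add: card_Un_disjoint)
qed

lemma hdeg_snoc: "hdeg (es @ [f]) u = hdeg es u + (if u \<in> f then 1 else 0)"
proof -
  have "{i. i < length (es @ [f]) \<and> u \<in> (es @ [f]) ! i} = {i. i < Suc (length es) \<and> u \<in> (es @ [f]) ! i}" by simp
  then show ?thesis unfolding hdeg_def
    by (simp add: card_lt_Suc nth_append cong: conj_cong)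
qed



lemma hdeg_1: "rinv N es \<Longrightarrow> hdeg es 1 = N"
proof -
  assume a: "rinv N es"
  have "{i. i < length es \<and> 1 \<in> es ! i} = {..<N}" using a unfolding rinv_def by auto
  then show ?thesis unfolding hdeg_def by simp
qed

lemma hdeg_big: "rinv N es \<Longrightarrow> u > N \<Longrightarrow> hdeg es u = 0"
proof -
  assume a: "rinv N es" "u > N"
  have h: "\<forall>i<N. es ! i \<subseteq> {1..Suc i}" and l: "length es = N" using a unfolding rinv_def by auto
  have "{i. i < length es \<and> u \<in> es ! i} = {}"
  proof (rule ccontr)
    assume "{i. i < length es \<and> u \<in> es ! i} \<noteq> {}"
    then obtain i where "i < N" "u \<in> es ! i" using l by auto
    moreover have "es ! i \<subseteq> {1..Suc i}" using h \<open>i < N\<close> by blast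
    ultimately have "u \<in> {1..Suc i}" by blast
    then have "u \<le> Suc i" by simp
    then show False using \<open>i < N\<close> a(2) by linarith
  qed
  then show ?thesis unfolding hdeg_def by simp
qed

lemma hdeg_pos: "rinv N es \<Longrightarrow> 1 \<le> u \<Longrightarrow> u \<le> N \<Longrightarrow> hdeg es u \<ge> 1"
proof -
  assume a: "rinv N es" "1 \<le> u" "u \<le> N"
  have h: "\<forall>i<N. Suc i \<in> es ! i" and l: "length es = N" using a unfolding rinv_def by auto
  have "u - 1 < N" using a(2,3) by arith
  then have "Suc (u - 1) \<in> es ! (u - 1)" using h by blast
  then have "u \<in> es ! (u - 1)" using a(2) by simp
  then have "u - 1 \<in> {i. i < length es \<and> u \<in> es ! i}" using a l by auto
  moreover have "finite {i. i < length es \<and> u \<in> es ! i}" by simp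
  ultimately have "card {i. i < length es \<and> u \<in> es ! i} \<noteq> 0" by auto
  then show ?thesis unfolding hdeg_def by linarith
qed

lemma Nk0: "rinv N es \<Longrightarrow> Nk 0 es = 0"
proof -
  assume a: "rinv N es"
  have l: "length es = N" using a unfolding rinv_def by auto
  have "{v \<in> {1..length es}. hdeg es v = 0} = {}"
  proof (rule ccontr)
    assume "{v \<in> {1..length es}. hdeg es v = 0} \<noteq> {}"
    then obtain v where "1 \<le> v" "v \<le> N" "hdeg es v = 0" using l by auto
    then show False using hdeg_pos[OF a, of v] by simp
  qed
  then show ?thesis unfolding Nk_def by simp
qed

lemma card_filter_real: "finite A \<Longrightarrow> real (card {v \<in> A. P v}) = (\<Sum>v\<in>A. if P v then 1 else 0)"
  by (simp add: sum.inter_filter[symmetric])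

definition Cnt :: "nat \<Rightarrow> hg \<Rightarrow> real" where
  "Cnt j es = (\<Sum>u\<in>{2..length es}. if hdeg es u = j then 1 else 0)"

lemma Nk_split:
  assumes "rinv N es" "N \<ge> 1"
  shows "real (Nk k es) = (if N = k then 1 else 0) + Cnt k es"
proof -
  have len: "length es = N" using assms unfolding rinv_def by simp
  have e: "{1..N} = insert 1 {2..N}" using assms(2) by auto
  have "real (Nk k es) = (\<Sum>v\<in>{1..N}. if hdeg es v = k then 1 else 0)"
    unfolding Nk_def len by (rule card_filter_real) simp
  also have "\<dots> = (if hdeg es 1 = k then 1 else 0) + (\<Sum>v\<in>{2..N}. if hdeg es v = k then 1 else 0)"
    unfolding e by (subst sum.insert) auto
  finally show ?thesis unfolding Cnt_def len hdeg_1[OF assms(1)] by simp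
qed



lemma X_exp:
  assumes I: "rinv N es" and N1: "N \<ge> 1" and r: "0 \<le> r" "r \<le> 1" and u: "2 \<le> u" "u \<le> N"
  shows "measure_pmf.expectation (rrh_step r es) (\<lambda>x. if u \<in> last x then 1 else 0) = (real (hdeg es u) - r) / N"
proof -
  have l: "length es = N" using I unfolding rinv_def by simp
  have ne: "es \<noteq> []" using l N1 by auto
  have t: "sterm r es (\<lambda>x. if u \<in> last x then 1 else 0) i = (if u \<in> es ! i then 1 else 0) - (if i = u - 1 then r else 0)"
    if i: "i < N" for i
  proof (cases "i = 0")
    case True
    have "es ! i = {1}" using inv_0[OF I N1] True by simp
    then show ?thesis unfolding sterm_def Let_def l using u True by auto
  next
    case False
    then have m: "Max (es ! i) = Suc i" "es ! i \<noteq> {1}" using inv_max[OF I i] by auto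
    have si: "Suc i \<in> es ! i" using I i unfolding rinv_def by auto
    have uv: "u \<noteq> N + 1" using u by simp
    show ?thesis
    proof (cases "u \<in> es ! i")
      case True
      then show ?thesis unfolding sterm_def Let_def l using m uv u by (auto simp: algebra_simps)
    next
      case False
      then have "i \<noteq> u - 1" using si u by auto
      then show ?thesis unfolding sterm_def Let_def l using m uv u False by auto
    qed
  qed
  have s1: "(\<Sum>i<N. (if u \<in> es ! i then 1 else 0)) = real (hdeg es u)"
  proof -
    have "{i. i < length es \<and> u \<in> es ! i} = {i \<in> {..<N}. u \<in> es ! i}" using l by auto
    moreover have "real (card {i \<in> {..<N}. u \<in> es ! i}) = (\<Sum>i<N. (if u \<in> es ! i then 1 else 0))"
      by (rule card_filter_real) simp
    ultimately show ?thesis unfolding hdeg_def by simp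
  qed
  have s2: "(\<Sum>i<N. (if i = u - 1 then r else 0)) = r"
    using u by (simp add: sum.delta)
  have "measure_pmf.expectation (rrh_step r es) (\<lambda>x. if u \<in> last x then 1 else 0)
      = (\<Sum>i<N. (if u \<in> es ! i then 1 else 0) - (if i = u - 1 then r else 0)) / N"
    using step_exp[OF ne r] t l by simp
  also have "\<dots> = (real (hdeg es u) - r) / N"
    by (simp only: sum_subtractf s1 s2)
  finally show ?thesis .
qed


lemma exp_affine_sum:
  fixes X :: "'i \<Rightarrow> 'a \<Rightarrow> real"
  assumes fin: "finite (set_pmf p)"
  shows "measure_pmf.expectation p (\<lambda>x. c + (\<Sum>u\<in>U. a u + b u * X u x))
     = c + (\<Sum>u\<in>U. a u + b u * measure_pmf.expectation p (X u))"
proof -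
  have int: "integrable (measure_pmf p) f" for f :: "'a \<Rightarrow> real"
    by (rule integrable_measure_pmf_finite[OF fin])
  show ?thesis
    by (simp add: int integral_sum integral_add measure_pmf.prob_space)
qed

lemma step_Nk:
  assumes I: "rinv N es" and N1: "N \<ge> 1" and r: "0 \<le> r" "r \<le> 1" and k: "k \<ge> 1"
  shows "measure_pmf.expectation (rrh_step r es) (\<lambda>x. real (Nk k x)) =
    (if N + 1 = k then 1 else 0) + (if k = 1 then 1 else 0)
    + Cnt k es * (1 - (real k - r) / N) + Cnt (k - 1) es * ((real k - 1 - r) / N)"
proof -
  have l: "length es = N" using I unfolding rinv_def by simp
  have ne: "es \<noteq> []" using l N1 by auto
  define Z where "Z u = (if hdeg es u = k then 1 else (0::real))" for u
  define W where "W u = (if hdeg es u + 1 = k then 1 else (0::real)) - Z u" for u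
  define X where "X u x = (if u \<in> last x then 1 else (0::real))" for u and x :: hg
  define c where "c = (if N + 1 = k then 1 else 0) + (if k = 1 then 1 else (0::real))"
  have pw: "real (Nk k x) = c + (\<Sum>u\<in>{2..N}. Z u + W u * X u x)"
    if x: "x \<in> set_pmf (rrh_step r es)" for x
  proof -
    obtain f where f: "x = es @ [f]" "f \<subseteq> {1..Suc N}" "Suc N \<in> f" "1 \<in> f"
      using inv_step[OF I N1 x] by blast
    have Ix: "rinv (Suc N) x" using inv_snoc[OF I f(2-4)] f(1) by simp
    have lx: "length x = Suc N" using Ix unfolding rinv_def by simp
    have e: "{2..Suc N} = insert (Suc N) {2..N}" using N1 by auto
    have hN: "hdeg x (Suc N) = 1" using f hdeg_snoc[of es f "Suc N"] hdeg_big[OF I, of "Suc N"] by simp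
    have hu: "(if hdeg x u = k then 1 else 0) = Z u + W u * X u x" if "u \<in> {2..N}" for u
      unfolding Z_def W_def X_def f(1) hdeg_snoc by auto
    have "real (Nk k x) = (if Suc N = k then 1 else 0) + Cnt k x"
      using Nk_split[OF Ix] by simp
    also have "Cnt k x = (if hdeg x (Suc N) = k then 1 else 0) + (\<Sum>u\<in>{2..N}. if hdeg x u = k then 1 else 0)"
      unfolding Cnt_def lx e by (subst sum.insert) auto
    also have "\<dots> = (if k = 1 then 1 else 0) + (\<Sum>u\<in>{2..N}. Z u + W u * X u x)"
      using hN hu by (auto intro!: sum.cong)
    finally show ?thesis unfolding c_def by simp
  qed
  have fin: "finite (set_pmf (rrh_step r es))" using step_fin[OF ne] .
  have "measure_pmf.expectation (rrh_step r es) (\<lambda>x. real (Nk k x))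
      = measure_pmf.expectation (rrh_step r es) (\<lambda>x. c + (\<Sum>u\<in>{2..N}. Z u + W u * X u x))"
    by (rule exp_cong[OF fin]) (use pw in simp)
  also have "\<dots> = c + (\<Sum>u\<in>{2..N}. Z u + W u * measure_pmf.expectation (rrh_step r es) (X u))"
    by (rule exp_affine_sum[OF fin])
  also have "\<dots> = c + (\<Sum>u\<in>{2..N}. Z u + W u * ((real (hdeg es u) - r) / N))"
    using X_exp[OF I N1 r] unfolding X_def by (intro arg_cong2[where f="(+)"] refl sum.cong) auto
  also have "(\<Sum>u\<in>{2..N}. Z u + W u * ((real (hdeg es u) - r) / N))
      = (\<Sum>u\<in>{2..N}. Z u * (1 - (real k - r) / N) + (if hdeg es u = k - 1 then 1 else 0) * ((real k - 1 - r) / N))"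
  proof (rule sum.cong[OF refl])
    fix u
    show "Z u + W u * ((real (hdeg es u) - r) / N) =
      Z u * (1 - (real k - r) / N) + (if hdeg es u = k - 1 then 1 else 0) * ((real k - 1 - r) / N)"
    proof (cases "hdeg es u = k")
      case True
      then have "hdeg es u \<noteq> k - 1" "hdeg es u + 1 \<noteq> k" using k by auto
      then show ?thesis unfolding Z_def W_def using True by (simp add: algebra_simps diff_divide_distrib)
    next
      case False
      show ?thesis
      proof (cases "hdeg es u + 1 = k")
        case True
        then have "real (hdeg es u) = real k - 1" by linarith
        then show ?thesis unfolding Z_def W_def using True False by auto
      next
        case F2: False
        then have "hdeg es u \<noteq> k - 1" using k by auto
        then show ?thesis unfolding Z_def W_def using False F2 by auto
      qed
    qed
  qed
  also have "\<dots> = Cnt k es * (1 - (real k - r) / N) + Cnt (k - 1) es * ((real k - 1 - r) / N)"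
    unfolding Cnt_def l Z_def by (simp add: sum.distrib sum_distrib_right sum_divide_distrib)
  finally show ?thesis unfolding c_def by simp
qed



lemma exp_lin2:
  fixes f g :: "'a \<Rightarrow> real"
  assumes fin: "finite (set_pmf p)"
  shows "measure_pmf.expectation p (\<lambda>x. c + (f x - d1) * A + (g x - d2) * B)
     = c + (measure_pmf.expectation p f - d1) * A + (measure_pmf.expectation p g - d2) * B"
proof -
  have int: "integrable (measure_pmf p) h" for h :: "'a \<Rightarrow> real"
    by (rule integrable_measure_pmf_finite[OF fin])
  show ?thesis
    by (simp add: int integral_add integral_diff measure_pmf.prob_space)
qed

definition aa :: "real \<Rightarrow> nat \<Rightarrow> nat \<Rightarrow> real" where
  "aa r k N = measure_pmf.expectation (rrh r N) (\<lambda>es. real (Nk k es))"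

lemma rec_main:
  assumes r: "0 \<le> r" "r \<le> 1" and k: "k \<ge> 1" and N: "N \<ge> 1"
  shows "aa r k (Suc N) = (1 - (real k - r) / N) * aa r k N +
    ((if N + 1 = k then 1 else 0) + (if k = 1 then 1 else 0) - (if N = k then 1 else 0) * (1 - (real k - r) / N)
     + (aa r (k - 1) N - (if N = k - 1 then 1 else 0)) * ((real k - 1 - r) / N))"
proof -
  obtain n where n: "N = Suc n" using N by (cases N) auto
  define c where "c = (if N + 1 = k then 1 else 0) + (if k = 1 then 1 else (0::real))"
  have fin: "finite (set_pmf (rrh r N))" by (rule rrh_fin)
  have "aa r k (Suc N) = measure_pmf.expectation (rrh r N)
          (\<lambda>es. measure_pmf.expectation (rrh_step r es) (\<lambda>x. real (Nk k x)))"
    unfolding aa_def n by (simp, rule bind_exp) (use rrh_fin rrh_ne step_fin in auto)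
  also have "\<dots> = measure_pmf.expectation (rrh r N)
      (\<lambda>es. c + (real (Nk k es) - (if N = k then 1 else 0)) * (1 - (real k - r) / N)
              + (real (Nk (k - 1) es) - (if N = k - 1 then 1 else 0)) * ((real k - 1 - r) / N))"
  proof (rule exp_cong[OF fin])
    fix es assume es: "es \<in> set_pmf (rrh r N)"
    have I: "rinv N es" using inv_rrh es n by blast
    show "measure_pmf.expectation (rrh_step r es) (\<lambda>x. real (Nk k x)) =
        c + (real (Nk k es) - (if N = k then 1 else 0)) * (1 - (real k - r) / N)
              + (real (Nk (k - 1) es) - (if N = k - 1 then 1 else 0)) * ((real k - 1 - r) / N)"
      unfolding step_Nk[OF I N r k] Nk_split[OF I N] c_def by simp
  qed
  also have "\<dots> = c + (aa r k N - (if N = k then 1 else 0)) * (1 - (real k - r) / N)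
              + (aa r (k - 1) N - (if N = k - 1 then 1 else 0)) * ((real k - 1 - r) / N)"
    unfolding aa_def by (rule exp_lin2[OF fin])
  finally show ?thesis unfolding c_def by (simp add: algebra_simps)
qed



definition LL :: "real \<Rightarrow> nat \<Rightarrow> real" where
  "LL r k = (if k = 0 then 0 else (1 - r) / ((real k - r + 1) * (real k - r)))"

lemma aa0: "N \<ge> 1 \<Longrightarrow> aa r 0 N = 0"
proof -
  assume N: "N \<ge> 1"
  obtain n where n: "N = Suc n" using N by (cases N) auto
  have "aa r 0 N = measure_pmf.expectation (rrh r N) (\<lambda>es. 0)"
    unfolding aa_def
  proof (rule exp_cong[OF rrh_fin])
    fix es assume "es \<in> set_pmf (rrh r N)"
    then have "rinv N es" using inv_rrh[of es r n] n by simp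
    then show "real (Nk 0 es) = 0" using Nk0 by simp
  qed
  then show ?thesis by simp
qed

lemma lim_all:
  assumes r: "0 \<le> r" "r < 1"
  shows "(\<lambda>N. aa r k N / N) \<longlonglongrightarrow> LL r k"
proof (induction k)
  case 0
  have "aa r 0 N / N = 0" for N by (cases "N = 0") (auto simp: aa0)
  then have "(\<lambda>N. aa r 0 N / N) = (\<lambda>N. 0)" by (intro ext)
  then show ?case by (simp add: LL_def)
next
  case (Suc j)
  define k where "k = Suc j"
  define \<beta> where "\<beta> = (if k = 1 then 1 else 0) + LL r j * (real k - 1 - r)"
  define b where "b N = ((if N + 1 = k then 1 else 0) + (if k = 1 then 1 else 0) - (if N = k then 1 else 0) * (1 - (real k - r) / N)
     + (aa r (k - 1) N - (if N = k - 1 then 1 else 0)) * ((real k - 1 - r) / N))" for N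
  have r1: "r \<le> 1" using r by simp
  have k1: "k \<ge> 1" unfolding k_def by simp
  have lim1: "(\<lambda>N. (if k = 1 then 1 else 0) + aa r j N / N * (real k - 1 - r)) \<longlonglongrightarrow> \<beta>"
    unfolding \<beta>_def by (intro tendsto_intros Suc.IH)
  have ev: "\<forall>\<^sub>F N in sequentially. (if k = 1 then 1 else 0) + aa r j N / N * (real k - 1 - r) = b N"
  proof (rule eventually_sequentiallyI[of "k + 1"])
    fix N assume "N \<ge> k + 1"
    then have "N + 1 \<noteq> k" "N \<noteq> k" "N \<noteq> k - 1" by auto
    then show "(if k = 1 then 1 else 0) + aa r j N / N * (real k - 1 - r) = b N"
      unfolding b_def k_def by simp
  qed
  have limb: "b \<longlonglongrightarrow> \<beta>" using Lim_transform_eventually[OF lim1 ev] .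
  have rec: "aa r k (Suc N) = (1 - (real k - r) / N) * aa r k N + b N" if "N \<ge> 1" for N
    unfolding b_def using rec_main[OF r(1) r1 k1 that] by simp
  have a0: "real k - r \<ge> 0" using k1 r by simp
  have L: "(\<lambda>N. aa r k N / N) \<longlonglongrightarrow> \<beta> / (1 + (real k - r))"
    by (rule rec_lim[OF a0 rec limb])
  have "\<beta> / (1 + (real k - r)) = LL r k"
  proof (cases "j = 0")
    case True
    then have "k = 1" unfolding k_def by simp
    have h: "(1 - r) * (2 - r) > 0" using r by (intro mult_pos_pos) auto
    have h2: "r * r + 2 \<noteq> r * 3" using h by (simp add: algebra_simps)
    show ?thesis unfolding \<beta>_def LL_def using True r h2 \<open>k = 1\<close> by (simp add: field_simps)
  next
    case False
    have p1: "real j - r > 0" using False r by simp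
    have p2: "real j - r + 1 > 0" using p1 by simp
    have p3: "1 + (real k - r) > 0" using k1 r by simp
    define t where "t = real j - r"
    have t0: "t > 0" using p1 unfolding t_def .
    have g: "(1 - r) / ((t + 1) * t) * t / (1 + (t + 1)) = (1 - r) / ((t + 1 + 1) * (t + 1))"
    proof -
      have "(1 - r) / ((t + 1) * t) * t = (1 - r) / (t + 1)" using t0 by simp
      then have "(1 - r) / ((t + 1) * t) * t / (1 + (t + 1)) = (1 - r) / ((t + 1) * (1 + (t + 1)))"
        by simp
      then show ?thesis by (simp add: mult.commute add.commute add.left_commute)
    qed
    have e1: "LL r j = (1 - r) / ((t + 1) * t)" unfolding LL_def t_def using False by simp
    have e2: "LL r k = (1 - r) / ((t + 1 + 1) * (t + 1))" unfolding LL_def t_def k_def by (simp add: algebra_simps)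
    have e3: "\<beta> = (1 - r) / ((t + 1) * t) * t" unfolding \<beta>_def e1 k_def t_def using False by simp
    have e4: "real k - r = t + 1" unfolding k_def t_def by simp
    show ?thesis unfolding e2 e3 e4 using g by simp
  qed
  then show ?case using L unfolding k_def by simp
qed

theorem mainTheorem14:
  fixes r :: real and k :: nat
  assumes "0 \<le> r" and "r < 1" and "1 \<le> k"
  shows "(\<lambda>N. measure_pmf.expectation (rrh r N) (\<lambda>es. real (Nk k es)) / real N)
           \<longlonglongrightarrow> (1 - r) / ((real k - r + 1) * (real k - r))"
  using lim_all[OF assms(1,2), of k] assms(3) unfolding aa_def LL_def by simp


end
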